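(* Let $r>0$, $\tau>0$, $p\in(0,1)$ be fixed with $\varepsilon=pe^{-\tau}$, let $\kappa=0$, and let $q_c=1-\frac{1}{r}\frac{1}{1-\varepsilon}$. For $q\in\mathbb{R}$ let $w(q)=(1-q_c,\,q_c-q,\,q)$, so that $\widehat{w(q)}$ is an equilibrium of the SIQ system, whose eigenvalues are the roots (with multiplicity) of \[ \chi_q(\lambda)=\lambda\Big(\lambda+1-r\big(1-q-2(q_c-q)\big)\big(1-\varepsilon e^{-\tau\lambda}\big)\Big). \] If $q\le q_c$, then $\widehat{w(q)}$ is linearly stable; otherwise it is linearly unstable. Specifically, for $q<q_c$ the eigenvalue $\lambda=0$ has multiplicity $1$ and all other eigenvalues satisfy $\mathrm{Re}(\lambda)<0$, and one eigenvalue crosses the imaginary axis as $q$ increases past $q_c$.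
   Context: The SIQ system (here with $\kappa=0$) is \[ \dot S(t)=-rS(t)I(t)+I(t)+r\varepsilon S(t-\tau-\kappa)I(t-\tau-\kappa),\quad \dot I(t)=rS(t)I(t)-I(t)-r\varepsilon S(t-\tau)I(t-\tau), \] \[ \dot Q(t)=r\varepsilon\big[S(t-\tau)I(t-\tau)-S(t-\tau-\kappa)I(t-\tau-\kappa)\big], \] on continuous histories with $S+I+Q\equiv1$; $\hat u$ is the constant function with value $u$. $\chi_q$ is the characteristic function of the linearization at $\widehat{w(q)}$. The equilibrium (lying on a line of equilibria) is linearly stable if all eigenvalues other than $\lambda=0$ have negative real part and linearly unstable if some eigenvalue has positive real part. *)

theory Defs
  imports "HOL-Complex_Analysis.Complex_Analysis"
begin

definition siq_eps :: "real \<Rightarrow> real \<Rightarrow> real" where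
  "siq_eps tau p = p * exp (- tau)"

definition siq_qc :: "real \<Rightarrow> real \<Rightarrow> real \<Rightarrow> real" where
  "siq_qc r tau p = 1 - (1 / r) * (1 / (1 - siq_eps tau p))"

definition siq_chi :: "real \<Rightarrow> real \<Rightarrow> real \<Rightarrow> real \<Rightarrow> complex \<Rightarrow> complex" where
  "siq_chi r tau p q z =
     z * (z + 1 - complex_of_real (r * (1 - q - 2 * (siq_qc r tau p - q)))
              * (1 - complex_of_real (siq_eps tau p) * exp (- complex_of_real tau * z)))"

text \<open>Equilibrium on a line of equilibria: linearly stable iff every eigenvalue other
  than 0 has negative real part; linearly unstable iff some eigenvalue has positive real part.\<close>
definition siq_lin_stable :: "real \<Rightarrow> real \<Rightarrow> real \<Rightarrow> real \<Rightarrow> bool" where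
  "siq_lin_stable r tau p q \<longleftrightarrow>
     (\<forall>z. siq_chi r tau p q z = 0 \<and> z \<noteq> 0 \<longrightarrow> Re z < 0)"

definition siq_lin_unstable :: "real \<Rightarrow> real \<Rightarrow> real \<Rightarrow> real \<Rightarrow> bool" where
  "siq_lin_unstable r tau p q \<longleftrightarrow>
     (\<exists>z. siq_chi r tau p q z = 0 \<and> Re z > 0)"

end

theory Submission
  imports Defs
begin
lemma stab:
  fixes c e tau :: real and z :: complex
  assumes e0: "0 < e" and e1: "e < 1" and t0: "tau > 0" and et: "e * (1 + tau) < 1"
    and cle: "c \<le> 1 / (1 - e)"
    and eq: "z + 1 - complex_of_real c * (1 - complex_of_real e * exp (- complex_of_real tau * z)) = 0"
    and nz: "z \<noteq> 0"
  shows "Re z < 0"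
proof (rule ccontr)
  assume "\<not> Re z < 0"
  hence x0: "Re z \<ge> 0" by simp
  define x where "x = Re z"
  define y where "y = Im z"
  have R: "x + 1 - c + c * e * (exp (- tau * x) * cos (tau * y)) = 0"
    using arg_cong[OF eq, of Re] by (simp add: Re_exp x_def y_def algebra_simps)
  have I: "y - c * e * (exp (- tau * x) * sin (tau * y)) = 0"
    using arg_cong[OF eq, of Im] by (simp add: Im_exp x_def y_def algebra_simps)
  have ex1: "exp (- tau * x) \<le> 1" using x0 t0 x_def by simp
  have ex0: "exp (- tau * x) > 0" by simp
  show False
  proof (cases "c > 0")
    case True
    have ceq: "c * e * tau < 1"
    proof -
      have "c * (e * tau) \<le> (1/(1-e)) * (e * tau)" using mult_right_mono[OF cle, of "e*tau"] e0 t0 by simp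
      hence "c * e * tau \<le> (1/(1-e)) * e * tau" by (simp add: mult.assoc)
      also have "\<dots> < 1" using e0 e1 et by (simp add: field_simps)
      finally show ?thesis .
    qed
    have y0: "y = 0"
    proof (rule ccontr)
      assume yn: "y \<noteq> 0"
      have "\<bar>y\<bar> = c * e * exp (- tau * x) * \<bar>sin (tau * y)\<bar>"
      proof -
        have "y = c * e * exp (- tau * x) * sin (tau * y)" using I by simp
        hence "\<bar>y\<bar> = \<bar>c * e * exp (- tau * x)\<bar> * \<bar>sin (tau * y)\<bar>" by (metis abs_mult)
        thus ?thesis using True e0 by simp
      qed
      also have "\<dots> \<le> c * e * 1 * \<bar>tau * y\<bar>"
        using True e0 ex1 ex0 abs_sin_x_le_abs_x[of "tau*y"]
        by (intro mult_mono) auto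
      also have "\<dots> = (c * e * tau) * \<bar>y\<bar>" using t0 by (simp add: abs_mult)
      also have "\<dots> < \<bar>y\<bar>" using ceq yn by simp
      finally show False by simp
    qed
    hence R2: "x + 1 - c + c * e * exp (- tau * x) = 0" using R by simp
    have "x \<noteq> 0" using nz y0 x_def y_def complex_eq_iff by auto
    hence xp: "x > 0" using x0 x_def by simp
    have "exp (- tau * x) \<ge> 1 - tau * x" using exp_ge_add_one_self[of "- tau * x"] by simp
    hence "c * e * exp (- tau * x) \<ge> c * e * (1 - tau * x)" using True e0 by simp
    moreover have "1 - c * (1 - e) \<ge> 0" using cle e1 by (simp add: field_simps)
    moreover have "x * (1 - c * e * tau) > 0" using xp ceq by simp
    ultimately show False using R2 by (simp add: algebra_simps)
  next
    case False
    have "\<bar>exp (- tau * x) * cos (tau * y)\<bar> \<le> 1 * 1"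
      unfolding abs_mult using ex1 ex0 by (intro mult_mono) auto
    hence "\<bar>(-c) * e * (exp (- tau * x) * cos (tau * y))\<bar> \<le> (- c * e) * 1"
    proof -
      have ce: "\<bar>- c * e\<bar> = - c * e" using False e0 by (simp add: abs_mult)
      show ?thesis unfolding abs_mult[of "(-c)*e"] ce
        using \<open>\<bar>exp (- tau * x) * cos (tau * y)\<bar> \<le> 1 * 1\<close> False e0
        by (intro mult_left_mono) (auto simp: mult_nonpos_nonneg)
    qed
    hence "\<bar>c * e * (exp (- tau * x) * cos (tau * y))\<bar> \<le> - c * e * (1 * 1)" by simp
    moreover have "-c * e \<le> - c" using False e1 by (simp add: mult_le_cancel_left1)
    ultimately show False using R x0 x_def by linarith
  qed
qed
lemma conv:
  fixes x c e tau :: real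
  shows "complex_of_real x + 1 - complex_of_real c * (1 - complex_of_real e * exp (- complex_of_real tau * complex_of_real x))
     = complex_of_real (x + 1 - c + c * e * exp (- tau * x))"
proof -
  have "- complex_of_real tau * complex_of_real x = complex_of_real (- tau * x)" by simp
  hence "exp (- complex_of_real tau * complex_of_real x) = complex_of_real (exp (- tau * x))"
    by (simp only: exp_of_real)
  thus ?thesis by (simp add: algebra_simps)
qed

lemma unst:
  fixes c e tau :: real
  assumes e0: "0 < e" and e1: "e < 1" and t0: "tau > 0" and cgt: "c > 1 / (1 - e)"
  shows "\<exists>x::real. x > 0 \<and> x + 1 - c + c * e * exp (- tau * x) = 0"
proof -
  define g where "g = (\<lambda>x::real. x + 1 - c + c * e * exp (- tau * x))"
  have c0: "c > 0" using cgt e1 by (smt (verit) divide_pos_pos)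
  have "c * (1 - e) > 1" using cgt e1 by (simp add: field_simps)
  hence g0: "g 0 < 0" unfolding g_def by (simp add: algebra_simps)
  have "c * e * exp (- tau * c) > 0" using c0 e0 by simp
  hence gc: "g c > 0" unfolding g_def by simp
  have cont: "continuous_on {0..c} g" unfolding g_def by (intro continuous_intros)
  obtain x where x: "0 \<le> x" "x \<le> c" "g x = 0"
    using IVT'[of g 0 0 c, OF _ _ _ cont] g0 gc c0 by auto
  have "x \<noteq> 0" using x g0 by auto
  hence "x > 0" using x by simp
  thus ?thesis using x(3) unfolding g_def by blast
qed

lemma zord:
  fixes c e tau :: real
  assumes "1 - c + c * e \<noteq> 0"
  shows "zorder (\<lambda>z. z * (z + 1 - complex_of_real c * (1 - complex_of_real e * exp (- complex_of_real tau * z)))) 0 = 1"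
proof (rule zorder_eqI[where S=UNIV and g="\<lambda>z. z + 1 - complex_of_real c * (1 - complex_of_real e * exp (- complex_of_real tau * z))"])
  show "(\<lambda>z. z + 1 - complex_of_real c * (1 - complex_of_real e * exp (- complex_of_real tau * z))) holomorphic_on UNIV"
    by (intro holomorphic_intros)
  have "(0::complex) + 1 - complex_of_real c * (1 - complex_of_real e * exp (- complex_of_real tau * 0)) = complex_of_real (1 - c + c * e)"
    by (simp add: algebra_simps)
  thus "(0::complex) + 1 - complex_of_real c * (1 - complex_of_real e * exp (- complex_of_real tau * 0)) \<noteq> 0"
    using assms by (metis of_real_eq_0_iff)
qed (auto simp: mult.commute)

lemma branch:
  fixes e tau r q0 :: real
  assumes e0: "0 < e" and e1: "e < 1" and t0: "tau > 0" and et: "e * (1 + tau) < 1" and r0: "r > 0"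
  shows "\<exists>\<delta>>0. \<exists>\<mu>::real \<Rightarrow> real. continuous_on {q0 - \<delta> <..< q0 + \<delta>} \<mu> \<and> \<mu> q0 = 0 \<and>
     (\<forall>q. \<bar>q - q0\<bar> < \<delta> \<longrightarrow>
        \<mu> q + 1 - (1/(1-e) + r*(q-q0)) + (1/(1-e) + r*(q-q0)) * e * exp (- tau * \<mu> q) = 0
        \<and> (q < q0 \<longrightarrow> \<mu> q < 0) \<and> (q > q0 \<longrightarrow> \<mu> q > 0))"
proof -
  define k where "k = (\<lambda>t::real. e * exp (tau * t) * (1 + tau + tau * t))"
  have "(k \<longlongrightarrow> k 0) (at_right 0)" unfolding k_def by (intro tendsto_intros)
  moreover have "k 0 < 1" unfolding k_def using et by (simp add: algebra_simps)
  ultimately have "eventually (\<lambda>t. k t < 1) (at_right 0)" by (rule order_tendstoD(2))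
  then obtain b where b: "b > 0" "\<And>t. t > 0 \<Longrightarrow> t < b \<Longrightarrow> k t < 1"
    unfolding eventually_at_right_field by auto
  define d where "d = min (b/2) (1/2)"
  have d0: "d > 0" and d1: "d < 1" and kd: "k d < 1" using b unfolding d_def by auto
  define \<phi> where "\<phi> = (\<lambda>x::real. (x + 1) / (1 - e * exp (- tau * x)))"
  have edbound: "e * exp (tau * d) < 1"
  proof -
    have "e * exp (tau * d) * 1 \<le> k d" unfolding k_def using e0 t0 d0
      by (intro mult_left_mono) auto
    thus ?thesis using kd by simp
  qed
  have den: "1 - e * exp (- tau * x) > 0" if "-d \<le> x" for x
  proof -
    have "exp (- tau * x) \<le> exp (tau * d)" using mult_left_mono[of "-x" d tau] that t0 by simp
    hence "e * exp (- tau * x) \<le> e * exp (tau * d)" using e0 by simp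
    thus ?thesis using edbound by simp
  qed
  have der: "DERIV \<phi> x :> ((1 - e * exp (- tau * x)) - (x + 1) * (e * tau * exp (- tau * x))) / (1 - e * exp (- tau * x))^2"
    if "-d \<le> x" for x
    unfolding \<phi>_def using den[OF that]
    by (auto intro!: derivative_eq_intros simp: power2_eq_square algebra_simps)
  have derpos: "((1 - e * exp (- tau * x)) - (x + 1) * (e * tau * exp (- tau * x))) / (1 - e * exp (- tau * x))^2 > 0"
    if "-d \<le> x" "x \<le> d" for x
  proof -
    have E: "exp (- tau * x) \<le> exp (tau * d)" using mult_left_mono[of "-x" d tau] that t0 by simp
    have p1: "0 < 1 + tau * (x + 1)" using that d1 t0 by (smt (verit) mult_pos_pos)
    have p2: "1 + tau * (x + 1) \<le> 1 + tau + tau * d" using that t0 by (simp add: algebra_simps mult_left_mono)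
    have "e * exp (- tau * x) * (1 + tau * (x + 1)) \<le> e * exp (tau * d) * (1 + tau + tau * d)"
      using E p1 p2 e0 by (intro mult_mono) auto
    hence "e * exp (- tau * x) * (1 + tau * (x + 1)) < 1" using kd unfolding k_def by simp
    hence "(1 - e * exp (- tau * x)) - (x + 1) * (e * tau * exp (- tau * x)) > 0"
      by (simp add: algebra_simps)
    thus ?thesis using den[OF that(1)] by simp
  qed
  have mono: "\<phi> a < \<phi> b" if "-d \<le> a" "a < b" "b \<le> d" for a b
    using DERIV_pos_imp_increasing[OF that(2)] der derpos that by (meson order_trans less_imp_le)
  have mono_iff: "\<phi> a < \<phi> b \<longleftrightarrow> a < b" if "-d \<le> a" "a \<le> d" "-d \<le> b" "b \<le> d" for a b
    using mono that by (metis linorder_neqE_linordered_idom order_less_asym)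
  have inj: "inj_on \<phi> {-d..d}"
    by (rule inj_onI) (metis atLeastAtMost_iff linorder_neqE_linordered_idom mono order_less_irrefl)
  have contphi: "continuous_on {-d..d} \<phi>"
    using der by (intro DERIV_atLeastAtMost_imp_continuous_on) auto
  define g where "g = inv_into {-d..d} \<phi>"
  have contg: "continuous_on (\<phi> ` {-d..d}) g"
    unfolding g_def by (rule continuous_on_inv[OF contphi compact_Icc]) (simp add: inj)
  have phi0: "\<phi> 0 = 1/(1-e)" unfolding \<phi>_def by simp
  define \<delta> where "\<delta> = min (\<phi> d - \<phi> 0) (\<phi> 0 - \<phi> (-d)) / r"
  have l1: "\<phi> (-d) < \<phi> 0" and l2: "\<phi> 0 < \<phi> d" using mono d0 by auto
  have dl0: "\<delta> > 0" unfolding \<delta>_def using l1 l2 r0 by simp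
  define C where "C = (\<lambda>q. 1/(1-e) + r*(q-q0))"
  have Cin: "C q \<in> \<phi> ` {-d..d}" and Cb: "\<phi> (-d) < C q" "C q < \<phi> d" if "\<bar>q - q0\<bar> < \<delta>" for q
  proof -
    have "r * \<bar>q - q0\<bar> < r * \<delta>" using that r0 by simp
    hence "\<bar>r * (q - q0)\<bar> < min (\<phi> d - \<phi> 0) (\<phi> 0 - \<phi> (-d))"
      unfolding \<delta>_def using r0 by (simp add: abs_mult)
    thus "\<phi> (-d) < C q" "C q < \<phi> d" unfolding C_def phi0[symmetric] by auto
    then obtain x where "-d \<le> x" "x \<le> d" "\<phi> x = C q"
      using IVT'[of \<phi> "-d" "C q" d, OF _ _ _ contphi] d0 by auto
    thus "C q \<in> \<phi> ` {-d..d}" by (metis atLeastAtMost_iff image_eqI)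
  qed
  define \<mu> where "\<mu> = (\<lambda>q. g (C q))"
  have muprop: "-d \<le> \<mu> q \<and> \<mu> q \<le> d \<and> \<phi> (\<mu> q) = C q" if "\<bar>q - q0\<bar> < \<delta>" for q
  proof -
    have "\<mu> q \<in> {-d..d}" unfolding \<mu>_def g_def using inv_into_into[OF Cin[OF that]] by simp
    moreover have "\<phi> (\<mu> q) = C q" unfolding \<mu>_def g_def using Cin[OF that] by (simp add: f_inv_into_f)
    ultimately show ?thesis by simp
  qed
  have "continuous_on {q0 - \<delta> <..< q0 + \<delta>} \<mu>"
    unfolding \<mu>_def
  proof (rule continuous_on_compose2[OF contg])
    show "continuous_on {q0 - \<delta><..<q0 + \<delta>} C" unfolding C_def by (intro continuous_intros)
    show "C ` {q0 - \<delta><..<q0 + \<delta>} \<subseteq> \<phi> ` {-d..d}"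
      using Cin by (auto simp: abs_less_iff)
  qed
  moreover have "\<mu> q0 = 0"
  proof -
    have "C q0 = \<phi> 0" unfolding C_def phi0 by simp
    thus ?thesis unfolding \<mu>_def g_def using d0 inj by (simp add: inv_into_f_f)
  qed
  moreover have "\<mu> q + 1 - C q + C q * e * exp (- tau * \<mu> q) = 0
        \<and> (q < q0 \<longrightarrow> \<mu> q < 0) \<and> (q > q0 \<longrightarrow> \<mu> q > 0)" if "\<bar>q - q0\<bar> < \<delta>" for q
  proof (intro conjI impI)
    have m: "-d \<le> \<mu> q" "\<mu> q \<le> d" "\<phi> (\<mu> q) = C q" using muprop[OF that] by auto
    have dd: "1 - e * exp (- tau * \<mu> q) > 0" using den[OF m(1)] .
    have "\<mu> q + 1 = C q * (1 - e * exp (- tau * \<mu> q))"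
      using m(3) dd unfolding \<phi>_def by (simp add: field_simps)
    thus "\<mu> q + 1 - C q + C q * e * exp (- tau * \<mu> q) = 0" by (simp add: algebra_simps)
    show "\<mu> q < 0" if "q < q0"
    proof -
      have "C q < \<phi> 0" unfolding C_def phi0 using that r0 by (simp add: mult_pos_neg)
      thus ?thesis using mono_iff[of "\<mu> q" 0] m d0 by auto
    qed
    show "\<mu> q > 0" if "q > q0"
    proof -
      have "C q > \<phi> 0" unfolding C_def phi0 using that r0 by simp
      thus ?thesis using mono_iff[of 0 "\<mu> q"] m d0 by auto
    qed
  qed
  ultimately show ?thesis using dl0 unfolding C_def by blast
qed


theorem proposition8:
  fixes r tau p :: real
  assumes "r > 0" and "tau > 0" and "0 < p" and "p < 1"
  shows "(\<forall>q. q \<le> siq_qc r tau p \<longrightarrow> siq_lin_stable r tau p q)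
    \<and> (\<forall>q. q > siq_qc r tau p \<longrightarrow> siq_lin_unstable r tau p q)
    \<and> (\<forall>q. q < siq_qc r tau p \<longrightarrow>
          zorder (siq_chi r tau p q) 0 = 1
          \<and> (\<forall>z. siq_chi r tau p q z = 0 \<and> z \<noteq> 0 \<longrightarrow> Re z < 0))
    \<and> (\<exists>\<delta>>0. \<exists>\<mu>::real \<Rightarrow> real.
          continuous_on {siq_qc r tau p - \<delta> <..< siq_qc r tau p + \<delta>} \<mu>
          \<and> \<mu> (siq_qc r tau p) = 0
          \<and> (\<forall>q. \<bar>q - siq_qc r tau p\<bar> < \<delta> \<longrightarrow>
                siq_chi r tau p q (complex_of_real (\<mu> q)) = 0
                \<and> (q < siq_qc r tau p \<longrightarrow> \<mu> q < 0)
                \<and> (q > siq_qc r tau p \<longrightarrow> \<mu> q > 0)))"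
proof -
  note r0 = assms(1) and t0 = assms(2) and p0 = assms(3) and p1 = assms(4)
  define e where "e = siq_eps tau p"
  define qc where "qc = siq_qc r tau p"
  have e0: "0 < e" unfolding e_def siq_eps_def using p0 by simp
  have emt: "exp (- tau) < 1" using t0 by simp
  have e1: "e < 1" unfolding e_def siq_eps_def using mult_strict_mono[OF p1 emt] by simp
  have et: "e * (1 + tau) < 1"
  proof -
    have a: "1 + tau < exp tau" using exp_minus_greater[of "-tau"] t0 by simp
    have "e * (1 + tau) = p * (exp (- tau) * (1 + tau))" unfolding e_def siq_eps_def by simp
    also have "\<dots> < 1 * (exp (- tau) * exp tau)"
    proof -
      have b: "exp (- tau) * (1 + tau) < exp (- tau) * exp tau" using a by simp
      have "0 \<le> exp (- tau) * (1 + tau)" using t0 by simp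
      thus ?thesis using mult_strict_mono[OF p1 b] by simp
    qed
    also have "\<dots> = 1" by (simp add: exp_add[symmetric])
    finally show ?thesis .
  qed
  define C where "C = (\<lambda>q. 1/(1-e) + r*(q-qc))"
  have cq: "r * (1 - q - 2 * (qc - q)) = C q" for q
  proof -
    have "r * (1 - qc) = r * ((1 / r) * (1 / (1 - e)))" unfolding qc_def siq_qc_def e_def by simp
    also have "\<dots> = 1 / (1 - e)" using r0 by simp
    finally have h: "r * (1 - qc) = 1 / (1 - e)" .
    have "r * (1 - q - 2 * (qc - q)) = r * (1 - qc) + r * (q - qc)" by (simp add: algebra_simps)
    thus ?thesis unfolding C_def h .
  qed
  have chi: "siq_chi r tau p q = (\<lambda>z. z * (z + 1 - complex_of_real (C q) * (1 - complex_of_real e * exp (- complex_of_real tau * z))))" for q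
    unfolding siq_chi_def qc_def[symmetric] e_def[symmetric] cq by simp
  have stabq: "Re z < 0" if "C q \<le> 1/(1-e)" "siq_chi r tau p q z = 0" "z \<noteq> 0" for q z
  proof -
    have "z + 1 - complex_of_real (C q) * (1 - complex_of_real e * exp (- complex_of_real tau * z)) = 0"
      using that(2,3) unfolding chi by simp
    thus ?thesis using stab[OF e0 e1 t0 et that(1)] that(3) by blast
  qed
  have P1: "\<forall>q. q \<le> qc \<longrightarrow> siq_lin_stable r tau p q"
  proof (intro allI impI)
    fix q assume "q \<le> qc"
    hence "C q \<le> 1/(1-e)" unfolding C_def using r0 by (simp add: mult_nonneg_nonpos)
    thus "siq_lin_stable r tau p q" unfolding siq_lin_stable_def using stabq by blast
  qed
  have P2: "\<forall>q. q > qc \<longrightarrow> siq_lin_unstable r tau p q"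
  proof (intro allI impI)
    fix q assume "q > qc"
    hence "C q > 1/(1-e)" unfolding C_def using r0 by simp
    then obtain x where x: "x > 0" "x + 1 - C q + C q * e * exp (- tau * x) = 0"
      using unst[OF e0 e1 t0] by blast
    have "siq_chi r tau p q (complex_of_real x) = 0" unfolding chi conv x(2) by simp
    thus "siq_lin_unstable r tau p q" unfolding siq_lin_unstable_def using x(1) by (intro exI[of _ "complex_of_real x"]) simp
  qed
  have P3: "\<forall>q. q < qc \<longrightarrow> zorder (siq_chi r tau p q) 0 = 1
          \<and> (\<forall>z. siq_chi r tau p q z = 0 \<and> z \<noteq> 0 \<longrightarrow> Re z < 0)"
  proof (intro allI impI conjI)
    fix q assume "q < qc"
    hence lt: "C q < 1/(1-e)" unfolding C_def using r0 by (simp add: mult_pos_neg)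
    hence "C q * (1 - e) < 1" using e1 by (simp add: field_simps)
    hence "1 - C q + C q * e \<noteq> 0" by (simp add: algebra_simps)
    thus "zorder (siq_chi r tau p q) 0 = 1" unfolding chi by (rule zord)
    show "Re z < 0" if "siq_chi r tau p q z = 0 \<and> z \<noteq> 0" for z
      using that stabq[of q z] lt by (meson less_imp_le)
  qed
  obtain \<delta> \<mu> where b: "\<delta> > 0" "continuous_on {qc - \<delta> <..< qc + \<delta>} \<mu>" "\<mu> qc = 0"
     "\<And>q. \<bar>q - qc\<bar> < \<delta> \<Longrightarrow>
        \<mu> q + 1 - C q + C q * e * exp (- tau * \<mu> q) = 0
        \<and> (q < qc \<longrightarrow> \<mu> q < 0) \<and> (q > qc \<longrightarrow> \<mu> q > 0)"
    using branch[OF e0 e1 t0 et r0, of qc] unfolding C_def by blast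
  have P4: "\<forall>q. \<bar>q - qc\<bar> < \<delta> \<longrightarrow>
                siq_chi r tau p q (complex_of_real (\<mu> q)) = 0
                \<and> (q < qc \<longrightarrow> \<mu> q < 0)
                \<and> (q > qc \<longrightarrow> \<mu> q > 0)"
  proof (intro allI impI)
    fix q assume q: "\<bar>q - qc\<bar> < \<delta>"
    have "siq_chi r tau p q (complex_of_real (\<mu> q)) = 0" unfolding chi conv using b(4)[OF q] by simp
    thus "siq_chi r tau p q (complex_of_real (\<mu> q)) = 0
                \<and> (q < qc \<longrightarrow> \<mu> q < 0)
                \<and> (q > qc \<longrightarrow> \<mu> q > 0)" using b(4)[OF q] by blast
  qed
  show ?thesis unfolding qc_def[symmetric] using P1 P2 P3 P4 b(1-3) by blast
qed

end
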